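(* For each $n=1,2,\dots$ there is a function $f:\{-1,1\}^n\to \{z\in\mathbb{C}:\ |z|=1\}$ with \[ I(f)<1 \qquad\text{and}\qquad H(|\hat f|^2)>\frac{n}{n+1}\log n. \]
   Context: Equip $\{-1,1\}^n$ with the uniform (normalized counting) probability measure. Let $\varepsilon_i:\{-1,1\}^n\to\{-1,1\}$ be the $i$-th coordinate projection, and for $A\subseteq[n]=\{1,\dots,n\}$ let $W_A=\prod_{i\in A}\varepsilon_i$. For $g:\{-1,1\}^n\to\mathbb{C}$, the Fourier–Walsh coefficients are $\hat g(A)=2^{-n}\sum_{\delta\in\{-1,1\}^n} g(\delta)W_A(\delta)$, so $g=\sum_{A\subseteq[n]}\hat g(A)W_A$. The influence is $I(g)=\sum_{A\subseteq[n]}|\hat g(A)|^2|A|$, and the Fourier entropy is $H(|\hat g|^2)=-\sum_{A\subseteq[n]}|\hat g(A)|^2\log|\hat g(A)|^2$ with $0\log 0=0$. Logarithms are to base $2$. *)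

theory Defs
  imports Complex_Main
begin

text \<open>Points of the cube \{-1,1\}^n are represented as functions nat => int whose
  values at coordinates 1..n lie in \{-1,1\} and which are 1 elsewhere
  (an extensional encoding, so that cube n is in bijection with \{-1,1\}^n).\<close>

definition cube :: "nat \<Rightarrow> (nat \<Rightarrow> int) set" where
  "cube n = {\<delta>. (\<forall>i\<in>{1..n}. \<delta> i = 1 \<or> \<delta> i = -1) \<and> (\<forall>i. i \<notin> {1..n} \<longrightarrow> \<delta> i = 1)}"

definition walsh :: "nat set \<Rightarrow> (nat \<Rightarrow> int) \<Rightarrow> complex" where
  "walsh A \<delta> = (\<Prod>i\<in>A. of_int (\<delta> i))"

definition fourier :: "nat \<Rightarrow> ((nat \<Rightarrow> int) \<Rightarrow> complex) \<Rightarrow> nat set \<Rightarrow> complex" where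
  "fourier n g A = (\<Sum>\<delta>\<in>cube n. g \<delta> * walsh A \<delta>) / 2 ^ n"

definition influence :: "nat \<Rightarrow> ((nat \<Rightarrow> int) \<Rightarrow> complex) \<Rightarrow> real" where
  "influence n g = (\<Sum>A\<in>Pow {1..n}. (cmod (fourier n g A))\<^sup>2 * real (card A))"

definition fourier_entropy :: "nat \<Rightarrow> ((nat \<Rightarrow> int) \<Rightarrow> complex) \<Rightarrow> real" where
  "fourier_entropy n g = - (\<Sum>A\<in>Pow {1..n}.
      (let p = (cmod (fourier n g A))\<^sup>2 in if p = 0 then 0 else p * log 2 p))"

end

theory Submission
  imports Defs
begin


lemma cube_Suc: "cube (Suc n) = (\<lambda>(\<delta>,x). \<delta>(Suc n := x)) ` (cube n \<times> {1,-1})"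
proof
  show "cube (Suc n) \<subseteq> (\<lambda>(\<delta>,x). \<delta>(Suc n := x)) ` (cube n \<times> {1,-1})"
  proof
    fix \<delta> assume d: "\<delta> \<in> cube (Suc n)"
    have "\<delta>(Suc n := 1) \<in> cube n" using d by (auto simp: cube_def)
    moreover have "\<delta> (Suc n) \<in> {1,-1}" using d by (auto simp: cube_def)
    moreover have "\<delta> = (\<delta>(Suc n := 1))(Suc n := \<delta> (Suc n))" by simp
    ultimately show "\<delta> \<in> (\<lambda>(\<delta>,x). \<delta>(Suc n := x)) ` (cube n \<times> {1,-1})"
      by (metis (no_types, lifting) SigmaI case_prod_conv image_eqI)
  qed
  show "(\<lambda>(\<delta>,x). \<delta>(Suc n := x)) ` (cube n \<times> {1,-1}) \<subseteq> cube (Suc n)"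
    unfolding cube_def by (auto simp: le_Suc_eq) (metis atLeastAtMost_iff One_nat_def)+
qed

lemma cube_inj: "inj_on (\<lambda>(\<delta>,x). \<delta>(Suc n := x)) (cube n \<times> {1,-1})"
proof (rule inj_onI, clarify)
  fix a x b y
  assume a: "a \<in> cube n" and b: "b \<in> cube n" and e: "a(Suc n := x) = b(Suc n := y)"
  have "x = y" using fun_cong[OF e, of "Suc n"] by simp
  moreover have "a = b"
  proof
    fix i show "a i = b i"
    proof (cases "i = Suc n")
      case True then show ?thesis using a b by (auto simp: cube_def)
    next
      case False then show ?thesis using fun_cong[OF e, of i] by simp
    qed
  qed
  ultimately show "a = b \<and> x = y" by simp
qed

lemma cube_prod:
  fixes h :: "nat \<Rightarrow> int \<Rightarrow> complex"
  shows "(\<Sum>\<delta>\<in>cube n. \<Prod>i\<in>{1..n}. h i (\<delta> i)) = (\<Prod>i\<in>{1..n}. h i 1 + h i (-1))"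
proof (induction n)
  case 0
  have "cube 0 = {\<lambda>_. 1}" by (auto simp: cube_def)
  then show ?case by simp
next
  case (Suc n)
  have "(\<Sum>\<delta>\<in>cube (Suc n). \<Prod>i\<in>{1..Suc n}. h i (\<delta> i))
      = (\<Sum>p\<in>cube n \<times> {1,-1}. \<Prod>i\<in>{1..Suc n}. h i (((fst p)(Suc n := snd p)) i))"
    unfolding cube_Suc by (subst sum.reindex[OF cube_inj]) (simp add: case_prod_beta)
  also have "\<dots> = (\<Sum>\<delta>\<in>cube n. \<Sum>x\<in>{1,-1}. \<Prod>i\<in>{1..Suc n}. h i ((\<delta>(Suc n := x)) i))"
    by (subst sum.cartesian_product) (simp add: case_prod_beta)
  also have "\<dots> = (\<Sum>\<delta>\<in>cube n. \<Sum>x\<in>{1,-1}. h (Suc n) x * (\<Prod>i\<in>{1..n}. h i (\<delta> i)))"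
  proof (rule sum.cong[OF refl], rule sum.cong[OF refl])
    fix \<delta> x
    have "(\<Prod>i\<in>{1..Suc n}. h i ((\<delta>(Suc n := x)) i)) = h (Suc n) x * (\<Prod>i\<in>{1..n}. h i ((\<delta>(Suc n := x)) i))"
      by (simp add: prod.cl_ivl_Suc mult.commute)
    also have "(\<Prod>i\<in>{1..n}. h i ((\<delta>(Suc n := x)) i)) = (\<Prod>i\<in>{1..n}. h i (\<delta> i))"
      by (rule prod.cong) auto
    finally show "(\<Prod>i\<in>{1..Suc n}. h i ((\<delta>(Suc n := x)) i)) = h (Suc n) x * (\<Prod>i\<in>{1..n}. h i (\<delta> i))" .
  qed
  also have "\<dots> = (h (Suc n) 1 + h (Suc n) (-1)) * (\<Sum>\<delta>\<in>cube n. \<Prod>i\<in>{1..n}. h i (\<delta> i))"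
    by (simp add: sum_distrib_left sum_distrib_right distrib_right sum.distrib)
  also have "\<dots> = (\<Prod>i\<in>{1..Suc n}. h i 1 + h i (-1))"
    using Suc by (simp add: prod.cl_ivl_Suc mult.commute)
  finally show ?case .
qed



lemma L1:
  fixes s2 c2 :: real
  assumes "finite S" "s2 + c2 = 1"
  shows "(\<Sum>A\<in>Pow S. s2 ^ card A * c2 ^ card (S - A)) = 1"
proof -
  have "(\<Prod>x\<in>S. s2 + c2) = (\<Sum>A\<in>Pow S. (\<Prod>x\<in>A. s2) * (\<Prod>x\<in>S-A. c2))"
    by (rule prod_add[OF assms(1)])
  then show ?thesis using assms(2) by simp
qed

lemma L2:
  fixes s2 c2 :: real
  assumes "finite S" "s2 + c2 = 1"
  shows "(\<Sum>A\<in>Pow S. s2 ^ card A * c2 ^ card (S - A) * real (card A)) = real (card S) * s2"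
proof -
  have j: "(\<Sum>A\<in>Pow S. if j \<in> A then s2 ^ card A * c2 ^ card (S - A) else 0) = s2" if "j \<in> S" for j
  proof -
    have "(\<Sum>A\<in>Pow S. if j \<in> A then s2 ^ card A * c2 ^ card (S - A) else 0)
        = (\<Sum>A\<in>Pow S. (\<Prod>x\<in>A. s2) * (\<Prod>x\<in>S-A. if x = j then 0 else c2))"
    proof (rule sum.cong[OF refl])
      fix A assume A: "A \<in> Pow S"
      show "(if j \<in> A then s2 ^ card A * c2 ^ card (S - A) else 0) = (\<Prod>x\<in>A. s2) * (\<Prod>x\<in>S-A. if x = j then 0 else c2)"
      proof (cases "j \<in> A")
        case True
        have "(\<Prod>x\<in>S-A. if x = j then 0 else c2) = (\<Prod>x\<in>S-A. c2)"
          by (rule prod.cong) (use True in auto)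
        then show ?thesis using True by simp
      next
        case False
        have "(\<Prod>x\<in>S-A. if x = j then 0 else c2) = 0"
          using False that assms(1) by (intro prod_zero) auto
        then show ?thesis using False by simp
      qed
    qed
    also have "\<dots> = (\<Prod>x\<in>S. s2 + (if x = j then 0 else c2))"
      by (rule prod_add[OF assms(1), symmetric])
    also have "\<dots> = (\<Prod>x\<in>S. if x = j then s2 else 1)"
      by (rule prod.cong) (use assms(2) in auto)
    also have "\<dots> = s2" using that assms(1) by simp
    finally show ?thesis .
  qed
  have "(\<Sum>A\<in>Pow S. s2 ^ card A * c2 ^ card (S - A) * real (card A))
      = (\<Sum>A\<in>Pow S. \<Sum>j\<in>S. if j \<in> A then s2 ^ card A * c2 ^ card (S - A) else 0)"
  proof (rule sum.cong[OF refl])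
    fix A assume A: "A \<in> Pow S"
    have "real (card A) = (\<Sum>j\<in>S. if j \<in> A then 1 else 0)"
    proof -
      have "S \<inter> A = A" using A by auto
      then have "card A = card (S \<inter> A)" by simp
      also have "real \<dots> = (\<Sum>j\<in>S \<inter> A. 1)" by simp
      also have "\<dots> = (\<Sum>j\<in>S. if j \<in> A then 1 else 0)"
        by (rule sum.inter_restrict[OF assms(1)])
      finally show ?thesis .
    qed
    then show "s2 ^ card A * c2 ^ card (S - A) * real (card A) = (\<Sum>j\<in>S. if j \<in> A then s2 ^ card A * c2 ^ card (S - A) else 0)"
      by (simp add: sum_distrib_left if_distrib cong: if_cong)
  qed
  also have "\<dots> = (\<Sum>j\<in>S. \<Sum>A\<in>Pow S. if j \<in> A then s2 ^ card A * c2 ^ card (S - A) else 0)"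
    by (rule sum.swap)
  also have "\<dots> = (\<Sum>j\<in>S. s2)" by (rule sum.cong[OF refl]) (rule j)
  also have "\<dots> = real (card S) * s2" by simp
  finally show ?thesis .
qed

lemma L3:
  fixes s2 c2 :: real
  assumes "finite S" "s2 + c2 = 1" "s2 > 0" "c2 > 0"
  shows "(\<Sum>A\<in>Pow S. s2 ^ card A * c2 ^ card (S - A) * log 2 (s2 ^ card A * c2 ^ card (S - A)))
       = real (card S) * (s2 * log 2 s2 + c2 * log 2 c2)"
proof -
  let ?P = "\<lambda>A. s2 ^ card A * c2 ^ card (S - A)"
  have "(\<Sum>A\<in>Pow S. ?P A * log 2 (?P A))
     = (\<Sum>A\<in>Pow S. log 2 s2 * (?P A * real (card A)) + log 2 c2 * (real (card S) * ?P A - ?P A * real (card A)))"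
  proof (rule sum.cong[OF refl])
    fix A assume A: "A \<in> Pow S"
    have fA: "finite A" using A assms(1) finite_subset by auto
    have cd: "real (card (S - A)) = real (card S) - real (card A)"
    proof -
      have "A \<subseteq> S" using A by auto
      then have "card (S - A) = card S - card A" "card A \<le> card S"
        using fA assms(1) by (auto simp: card_Diff_subset card_mono)
      then show ?thesis by simp
    qed
    have lg: "log 2 (?P A) = real (card A) * log 2 s2 + real (card (S - A)) * log 2 c2"
      using assms by (simp add: log_mult log_nat_power)
    then show "?P A * log 2 (?P A) = log 2 s2 * (?P A * real (card A)) + log 2 c2 * (real (card S) * ?P A - ?P A * real (card A))"
      unfolding lg cd by (simp add: algebra_simps)
  qed
  also have "\<dots> = log 2 s2 * (\<Sum>A\<in>Pow S. ?P A * real (card A)) + log 2 c2 * (real (card S) * (\<Sum>A\<in>Pow S. ?P A) - (\<Sum>A\<in>Pow S. ?P A * real (card A)))"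
    by (simp add: sum.distrib sum_subtractf[symmetric] sum_distrib_left right_diff_distrib)
  also have "\<dots> = real (card S) * (s2 * log 2 s2 + c2 * log 2 c2)"
    using L1[OF assms(1,2)] L2[OF assms(1,2)] assms(2) apply (simp add: algebra_simps)
    by (metis add.commute distrib_right mult_1)
  finally show ?thesis .
qed



lemma fourier_f:
  fixes c s :: real
  assumes A: "A \<subseteq> {1..n}"
  shows "fourier n (\<lambda>\<delta>. \<Prod>i\<in>{1..n}. complex_of_real c + \<i> * complex_of_real s * of_int (\<delta> i)) A
       = (\<Prod>i\<in>{1..n}. if i \<in> A then \<i> * complex_of_real s else complex_of_real c)"
proof -
  let ?h = "\<lambda>i (x::int). (complex_of_real c + \<i> * complex_of_real s * of_int x) * (if i \<in> A then of_int x else 1)"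
  have w: "walsh A \<delta> = (\<Prod>i\<in>{1..n}. if i \<in> A then of_int (\<delta> i) else 1)" for \<delta>
  proof -
    have "{1..n} \<inter> A = A" using A by auto
    then have "walsh A \<delta> = (\<Prod>i\<in>{1..n} \<inter> A. of_int (\<delta> i))" by (simp add: walsh_def)
    also have "\<dots> = (\<Prod>i\<in>{1..n}. if i \<in> A then of_int (\<delta> i) else 1)"
      by (rule prod.inter_restrict) simp
    finally show ?thesis .
  qed
  have "(\<Sum>\<delta>\<in>cube n. (\<Prod>i\<in>{1..n}. complex_of_real c + \<i> * complex_of_real s * of_int (\<delta> i)) * walsh A \<delta>)
      = (\<Sum>\<delta>\<in>cube n. \<Prod>i\<in>{1..n}. ?h i (\<delta> i))"
    by (simp add: w prod.distrib)
  also have "\<dots> = (\<Prod>i\<in>{1..n}. ?h i 1 + ?h i (-1))" by (rule cube_prod)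
  also have "\<dots> = (\<Prod>i\<in>{1..n}. 2 * (if i \<in> A then \<i> * complex_of_real s else complex_of_real c))"
    by (rule prod.cong) auto
  also have "\<dots> = 2 ^ n * (\<Prod>i\<in>{1..n}. if i \<in> A then \<i> * complex_of_real s else complex_of_real c)"
    by (simp add: prod.distrib)
  finally show ?thesis unfolding fourier_def by simp
qed

lemma sq_f:
  fixes c s :: real
  assumes "finite S" "A \<subseteq> S"
  shows "(cmod (\<Prod>i\<in>S. if i \<in> A then \<i> * complex_of_real s else complex_of_real c))\<^sup>2
     = (s\<^sup>2) ^ card A * (c\<^sup>2) ^ card (S - A)"
proof -
  have "(cmod (\<Prod>i\<in>S. if i \<in> A then \<i> * complex_of_real s else complex_of_real c))\<^sup>2
      = (\<Prod>i\<in>S. (cmod (if i \<in> A then \<i> * complex_of_real s else complex_of_real c))\<^sup>2)"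
    by (simp add: prod_norm[symmetric] prod_power_distrib)
  also have "\<dots> = (\<Prod>i\<in>S. if i \<in> A then s\<^sup>2 else c\<^sup>2)"
    by (rule prod.cong) (auto simp: norm_mult)
  also have "\<dots> = (\<Prod>i\<in>S \<inter> {x. x \<in> A}. s\<^sup>2) * (\<Prod>i\<in>S \<inter> - {x. x \<in> A}. c\<^sup>2)"
    by (rule prod.If_cases[OF assms(1)])
  also have "S \<inter> {x. x \<in> A} = A" using assms by auto
  also have "S \<inter> - {x. x \<in> A} = S - A" by auto
  finally show ?thesis by simp
qed


theorem theorem2:
  fixes n :: nat
  assumes "n \<ge> 1"
  shows "\<exists>f :: (nat \<Rightarrow> int) \<Rightarrow> complex.
           (\<forall>\<delta>\<in>cube n. cmod (f \<delta>) = 1) \<and>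
           influence n f < 1 \<and>
           fourier_entropy n f > real n / real (n + 1) * log 2 (real n)"
proof -
  define N where "N = real n"
  have N1: "N \<ge> 1" using assms by (simp add: N_def)
  define s2 where "s2 = 1 / (N + 1)"
  define c2 where "c2 = N / (N + 1)"
  define c where "c = sqrt c2"
  define s where "s = sqrt s2"
  have s2p: "s2 > 0" and c2p: "c2 > 0" using N1 by (auto simp: s2_def c2_def)
  have sc: "s2 + c2 = 1" using N1 by (simp add: s2_def c2_def field_simps)
  have csq: "c\<^sup>2 = c2" and ssq: "s\<^sup>2 = s2" using s2p c2p by (auto simp: c_def s_def)
  define f where "f = (\<lambda>\<delta>::nat\<Rightarrow>int. \<Prod>i\<in>{1..n}. complex_of_real c + \<i> * complex_of_real s * of_int (\<delta> i))"
  let ?P = "\<lambda>A. s2 ^ card A * c2 ^ card ({1..n} - A)"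
  have P: "(cmod (fourier n f A))\<^sup>2 = ?P A" if "A \<in> Pow {1..n}" for A
    using that unfolding f_def
    by (subst fourier_f) (auto simp: sq_f csq ssq)
  have Ppos: "?P A > 0" for A using s2p c2p by simp
  have unit: "cmod (f \<delta>) = 1" if "\<delta> \<in> cube n" for \<delta>
  proof -
    have "cmod (f \<delta>) = (\<Prod>i\<in>{1..n}. cmod (complex_of_real c + \<i> * complex_of_real s * of_int (\<delta> i)))"
      unfolding f_def by (simp add: prod_norm)
    also have "\<dots> = (\<Prod>i\<in>{1..n}. 1)"
    proof (rule prod.cong[OF refl])
      fix i assume "i \<in> {1..n}"
      then have "\<delta> i = 1 \<or> \<delta> i = -1" using that by (auto simp: cube_def)
      then have "complex_of_real c + \<i> * complex_of_real s * of_int (\<delta> i) = Complex c (real_of_int (\<delta> i) * s)"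
        by (auto simp: complex_eq_iff)
      moreover have "cmod (Complex c (real_of_int (\<delta> i) * s)) = sqrt (c\<^sup>2 + s\<^sup>2)"
        using \<open>\<delta> i = 1 \<or> \<delta> i = -1\<close> by (auto simp: cmod_def power2_eq_square)
      ultimately show "cmod (complex_of_real c + \<i> * complex_of_real s * of_int (\<delta> i)) = 1"
        using sc by (simp add: csq ssq add.commute)
    qed
    finally show ?thesis by simp
  qed
  have infl: "influence n f = N * s2"
  proof -
    have "influence n f = (\<Sum>A\<in>Pow {1..n}. ?P A * real (card A))"
      unfolding influence_def by (rule sum.cong) (auto simp: P)
    also have "\<dots> = N * s2" using L2[of "{1..n}" s2 c2] sc by (simp add: N_def)
    finally show ?thesis .
  qed
  have ent: "fourier_entropy n f = - (N * (s2 * log 2 s2 + c2 * log 2 c2))"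
  proof -
    have "fourier_entropy n f = - (\<Sum>A\<in>Pow {1..n}. ?P A * log 2 (?P A))"
      unfolding fourier_entropy_def
      by (rule arg_cong[where f = uminus], rule sum.cong) (use Ppos in \<open>auto simp: P Let_def\<close>)
    also have "\<dots> = - (N * (s2 * log 2 s2 + c2 * log 2 c2))"
      using L3[of "{1..n}" s2 c2] sc s2p c2p by (simp add: N_def)
    finally show ?thesis .
  qed
  have "influence n f < 1" using N1 by (simp add: infl s2_def)
  moreover have "fourier_entropy n f > real n / real (n + 1) * log 2 (real n)"
  proof -
    have a: "- (N * (s2 * log 2 s2)) = N / (N + 1) * log 2 (N + 1)"
      using N1 by (simp add: s2_def log_divide)
    have b: "- (N * (c2 * log 2 c2)) \<ge> 0"
    proof -
      have "c2 \<le> 1" using sc s2p by simp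
      then have "log 2 c2 \<le> 0" using c2p by simp
      then show ?thesis using N1 c2p by (simp add: mult_nonneg_nonpos mult_nonpos_nonneg)
    qed
    have "log 2 N < log 2 (N + 1)" using N1 by simp
    then have "N / (N + 1) * log 2 N < N / (N + 1) * log 2 (N + 1)"
      using N1 by (intro mult_strict_left_mono) auto
    then show ?thesis using a b unfolding ent by (simp add: N_def algebra_simps)
  qed
  ultimately show ?thesis using unit by blast
qed

end
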